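(* Let $\varphi,\varphi_0:\mathbb{R}^d\to\mathbb{R}$, $p$ a positive integer, $w\in\mathbb{R}^d$, and $\hat\varphi_p(x;w):=\sum_{i=0}^p\frac1{i!}\nabla^i\varphi(w)[x-w]^{\otimes i}$. Suppose $\nabla^p\varphi$ is Lipschitz, $x_\varphi\in\arg\min_x\varphi(x)+\varphi_0(x)$, and $$x_{\hat\varphi_p}\in\arg\min_x\hat\varphi_p(x;w)+\frac{\mathrm{Lip}(\nabla^p\varphi)}{(p+1)!}\|x-w\|_2^{p+1}+\varphi_0(x).$$ If $\hat\varphi_p(\cdot;w)+\frac{\mathrm{Lip}(\nabla^p\varphi)}{(p+1)!}\|\cdot-w\|_2^{p+1}+\varphi_0$ has $\nu(r)=\mu r^q$ gradient growth for some $\mu>0$ and $q>0$, then $$\|x_\varphi-x_{\hat\varphi_p}\|_2^{q-1}\le\frac{2\,\mathrm{Lip}(\nabla^p\varphi)}{\mu}\frac1{p!}\|x_\varphi-w\|_2^p.$$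
   Context: For a matrix or tensor $H$, $\|H\|_{op}:=\sup_{v\ne0}\|H[v]\|_{op}/\|v\|_2$ (with $\|v\|_{op}=\|v\|_2$ for vectors), and $\mathrm{Lip}(f):=\sup_{x\ne y}\|f(x)-f(y)\|_{op}/\|x-y\|_2$. A function $\psi$ has $\nu$ gradient growth if it is subdifferentiable and $\nu(\|x-y\|_2)\le\langle y-x,u-v\rangle$ for all $x,y\in\mathbb{R}^d$ and all $u\in\partial\psi(y)$, $v\in\partial\psi(x)$. *)

theory Defs
  imports "HOL-Analysis.Analysis"
begin

text \<open>Higher-order derivative as a multilinear form on lists of vectors:
  hderiv k f x [v1,...,vk] = nabla^k f(x)[v1,...,vk], defined by iterated
  Frechet derivatives: nabla^(k+1) f(x)[v, vs] = D(y |-> nabla^k f(y)[vs])(x)[v].\<close>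
fun hderiv :: "nat \<Rightarrow> ('a::real_normed_vector \<Rightarrow> real) \<Rightarrow> 'a \<Rightarrow> 'a list \<Rightarrow> real" where
  "hderiv 0 f x vs = f x"
| "hderiv (Suc k) f x vs = frechet_derivative (\<lambda>y. hderiv k f y (tl vs)) (at x) (hd vs)"

definition hdiff :: "nat \<Rightarrow> ('a::real_normed_vector \<Rightarrow> real) \<Rightarrow> bool" where
  "hdiff p f \<longleftrightarrow> (\<forall>k<p. \<forall>vs x. (\<lambda>y. hderiv k f y vs) differentiable (at x))"

fun tensor_opnorm :: "nat \<Rightarrow> ('a::real_normed_vector list \<Rightarrow> real) \<Rightarrow> real" where
  "tensor_opnorm 0 T = \<bar>T []\<bar>"
| "tensor_opnorm (Suc k) T = (SUP v\<in>-{0}. tensor_opnorm k (\<lambda>vs. T (v # vs)) / norm v)"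

definition lip_quotients :: "nat \<Rightarrow> ('a::real_normed_vector \<Rightarrow> real) \<Rightarrow> real set" where
  "lip_quotients p f = {tensor_opnorm p (\<lambda>vs. hderiv p f x vs - hderiv p f y vs) / dist x y | x y. x \<noteq> y}"

definition Lip_hderiv :: "nat \<Rightarrow> ('a::real_normed_vector \<Rightarrow> real) \<Rightarrow> real" where
  "Lip_hderiv p f = Sup (lip_quotients p f)"

definition taylor :: "nat \<Rightarrow> ('a::real_normed_vector \<Rightarrow> real) \<Rightarrow> 'a \<Rightarrow> 'a \<Rightarrow> real" where
  "taylor p f w x = (\<Sum>i=0..p. (1 / fact i) * hderiv i f w (replicate i (x - w)))"

definition subdiff :: "('a::real_inner \<Rightarrow> real) \<Rightarrow> 'a \<Rightarrow> 'a set" where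
  "subdiff f x = {g. \<forall>y. f x + inner g (y - x) \<le> f y}"

definition gradient_growth :: "(real \<Rightarrow> real) \<Rightarrow> ('a::real_inner \<Rightarrow> real) \<Rightarrow> bool" where
  "gradient_growth \<nu> \<psi> \<longleftrightarrow> (\<forall>x. subdiff \<psi> x \<noteq> {}) \<and>
     (\<forall>x y u v. u \<in> subdiff \<psi> y \<longrightarrow> v \<in> subdiff \<psi> x \<longrightarrow> \<nu> (norm (x - y)) \<le> inner (y - x) (u - v))"

end

theory Submission
  imports Defs
begin

lemma schwarz_half:
  fixes g :: "'a::real_normed_vector \<Rightarrow> real"
  assumes g: "\<And>z. (g has_derivative g' z) (at z)"
    and D: "\<And>v. ((\<lambda>z. g' z v) has_derivative (\<lambda>u. D u v)) (at y)"
    and e: "\<epsilon> > 0"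
  shows "\<exists>\<delta>>0. \<forall>h. 0 < h \<and> h < \<delta> \<longrightarrow>
     \<bar>(g (y + h *\<^sub>R a + h *\<^sub>R b) - g (y + h *\<^sub>R a) - g (y + h *\<^sub>R b) + g y) - h^2 * D b a\<bar> \<le> \<epsilon> * h^2"
proof -
  define N where "N = norm a + norm b + 1"
  have N: "N > 0" unfolding N_def by (smt (verit) norm_ge_zero)
  have Da: "((\<lambda>z. g' z a) has_derivative (\<lambda>u. D u a)) (at y)" by (rule D)
  have lin: "linear (\<lambda>u. D u a)" using Da has_derivative_linear by blast
  obtain \<delta> where \<delta>: "\<delta> > 0" and
    H: "\<And>y'. norm (y' - y) < \<delta> \<Longrightarrow> \<bar>g' y' a - g' y a - D (y' - y) a\<bar> \<le> (\<epsilon> / (2*N)) * norm (y' - y)"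
  proof -
    have "\<epsilon> / (2*N) > 0" using e N by simp
    then obtain d where "d > 0" "\<forall>y'. norm (y' - y) < d \<longrightarrow> norm (g' y' a - g' y a - D (y' - y) a) \<le> (\<epsilon> / (2*N)) * norm (y' - y)"
      using Da[unfolded has_derivative_at_alt] by blast
    then show ?thesis using that by auto
  qed
  show ?thesis
  proof (intro exI[of _ "\<delta>/N"] conjI allI impI)
    show "\<delta>/N > 0" using \<delta> N by simp
    fix h :: real assume hh: "0 < h \<and> h < \<delta>/N"
    hence h0: "0 < h" and hN: "h * N < \<delta>" using N by (auto simp: field_simps)
    define F where "F s = g (y + s *\<^sub>R a + h *\<^sub>R b) - g (y + s *\<^sub>R a)" for s
    define F' where "F' s = g' (y + s *\<^sub>R a + h *\<^sub>R b) a - g' (y + s *\<^sub>R a) a" for s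
    have dF: "DERIV F s :> F' s" for s
    proof -
      have l1: "linear (g' z)" for z using g has_derivative_linear by blast
      have d1: "((\<lambda>s. g (y + s *\<^sub>R a + h *\<^sub>R b)) has_derivative (\<lambda>t. g' (y + s *\<^sub>R a + h *\<^sub>R b) (t *\<^sub>R a))) (at s)"
        by (rule has_derivative_compose[OF _ g, where f="\<lambda>s. y + s *\<^sub>R a + h *\<^sub>R b"])
           (auto intro!: derivative_eq_intros)
      have d2: "((\<lambda>s. g (y + s *\<^sub>R a)) has_derivative (\<lambda>t. g' (y + s *\<^sub>R a) (t *\<^sub>R a))) (at s)"
        by (rule has_derivative_compose[OF _ g, where f="\<lambda>s. y + s *\<^sub>R a"])
           (auto intro!: derivative_eq_intros)
      have "(F has_derivative (\<lambda>t. g' (y + s *\<^sub>R a + h *\<^sub>R b) (t *\<^sub>R a) - g' (y + s *\<^sub>R a) (t *\<^sub>R a))) (at s)"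
        unfolding F_def by (rule has_derivative_diff[OF d1 d2])
      moreover have "(\<lambda>t. g' (y + s *\<^sub>R a + h *\<^sub>R b) (t *\<^sub>R a) - g' (y + s *\<^sub>R a) (t *\<^sub>R a)) = (*) (F' s)"
        by (rule ext) (simp add: F'_def linear_scale[OF l1] algebra_simps)
      ultimately show ?thesis by (simp add: has_field_derivative_def)
    qed
    obtain \<xi> where \<xi>: "0 < \<xi>" "\<xi> < h" and mvt: "F h - F 0 = (h - 0) * F' \<xi>"
      using MVT2[of 0 h F F'] h0 dF by blast
    have n1: "norm ((y + \<xi> *\<^sub>R a + h *\<^sub>R b) - y) \<le> h * N"
    proof -
      have "norm ((y + \<xi> *\<^sub>R a + h *\<^sub>R b) - y) \<le> \<xi> * norm a + h * norm b"
        using norm_triangle_ineq[of "\<xi> *\<^sub>R a" "h *\<^sub>R b"] \<xi> h0 by simp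
      also have "\<dots> \<le> h * N" unfolding N_def using \<xi> h0
        by (smt (verit, best) mult_right_mono norm_ge_zero distrib_left mult_nonneg_nonneg)
      finally show ?thesis .
    qed
    have n2: "norm ((y + \<xi> *\<^sub>R a) - y) \<le> h * N"
    proof -
      have "norm ((y + \<xi> *\<^sub>R a) - y) = \<xi> * norm a" using \<xi> by simp
      also have "\<dots> \<le> h * N" unfolding N_def using \<xi> h0
        by (smt (verit, best) mult_right_mono norm_ge_zero distrib_left mult_nonneg_nonneg)
      finally show ?thesis .
    qed
    have E1: "\<bar>g' (y + \<xi> *\<^sub>R a + h *\<^sub>R b) a - g' y a - D (\<xi> *\<^sub>R a + h *\<^sub>R b) a\<bar> \<le> (\<epsilon> / (2*N)) * (h * N)"
      using H[of "y + \<xi> *\<^sub>R a + h *\<^sub>R b"] n1 hN e N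
      by (smt (verit, best) add_diff_cancel_left' divide_pos_pos mult_left_mono add.assoc)
    have E2: "\<bar>g' (y + \<xi> *\<^sub>R a) a - g' y a - D (\<xi> *\<^sub>R a) a\<bar> \<le> (\<epsilon> / (2*N)) * (h * N)"
      using H[of "y + \<xi> *\<^sub>R a"] n2 hN e N
      by (smt (verit, best) add_diff_cancel_left' divide_pos_pos mult_left_mono)
    have lD: "D (\<xi> *\<^sub>R a + h *\<^sub>R b) a - D (\<xi> *\<^sub>R a) a = h * D b a"
      by (simp add: linear_add[OF lin] linear_scale[OF lin])
    have "\<bar>F' \<xi> - h * D b a\<bar> \<le> 2 * ((\<epsilon> / (2*N)) * (h * N))"
      using E1 E2 lD unfolding F'_def by linarith
    also have "\<dots> = \<epsilon> * h" using N by (simp add: field_simps)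
    finally have "\<bar>F' \<xi> - h * D b a\<bar> \<le> \<epsilon> * h" .
    hence hF: "h * \<bar>F' \<xi> - h * D b a\<bar> \<le> h * (\<epsilon> * h)" using h0 by (simp add: mult_left_mono)
    moreover have Fd: "F h - F 0 = g (y + h *\<^sub>R a + h *\<^sub>R b) - g (y + h *\<^sub>R a) - g (y + h *\<^sub>R b) + g y"
      unfolding F_def by simp
    ultimately show "\<bar>(g (y + h *\<^sub>R a + h *\<^sub>R b) - g (y + h *\<^sub>R a) - g (y + h *\<^sub>R b) + g y) - h^2 * D b a\<bar> \<le> \<epsilon> * h^2"
    proof -
      have eq: "(g (y + h *\<^sub>R a + h *\<^sub>R b) - g (y + h *\<^sub>R a) - g (y + h *\<^sub>R b) + g y) - h^2 * D b a = h * (F' \<xi> - h * D b a)"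
        using mvt Fd by (simp add: power2_eq_square algebra_simps)
      show ?thesis unfolding eq using `h * \<bar>F' \<xi> - h * D b a\<bar> \<le> h * (\<epsilon> * h)` h0
        by (simp add: abs_mult power2_eq_square mult.assoc)
    qed
  qed
qed


lemma schwarz:
  fixes g :: "'a::real_normed_vector \<Rightarrow> real"
  assumes g: "\<And>z. (g has_derivative g' z) (at z)"
    and D: "\<And>v. ((\<lambda>z. g' z v) has_derivative (\<lambda>u. D u v)) (at y)"
  shows "D a b = D b a"
proof (rule ccontr)
  assume ne: "D a b \<noteq> D b a"
  define \<alpha> where "\<alpha> = \<bar>D a b - D b a\<bar>"
  have a0: "\<alpha> > 0" using ne unfolding \<alpha>_def by simp
  obtain d1 where d1: "d1 > 0" and H1: "\<And>h. 0 < h \<Longrightarrow> h < d1 \<Longrightarrow>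
     \<bar>(g (y + h *\<^sub>R a + h *\<^sub>R b) - g (y + h *\<^sub>R a) - g (y + h *\<^sub>R b) + g y) - h^2 * D b a\<bar> \<le> (\<alpha>/4) * h^2"
    using schwarz_half[OF g D, of "\<alpha>/4" a b] a0 by auto
  obtain d2 where d2: "d2 > 0" and H2: "\<And>h. 0 < h \<Longrightarrow> h < d2 \<Longrightarrow>
     \<bar>(g (y + h *\<^sub>R b + h *\<^sub>R a) - g (y + h *\<^sub>R b) - g (y + h *\<^sub>R a) + g y) - h^2 * D a b\<bar> \<le> (\<alpha>/4) * h^2"
    using schwarz_half[OF g D, of "\<alpha>/4" b a] a0 by auto
  define h where "h = min d1 d2 / 2"
  have h: "0 < h" "h < d1" "h < d2" using d1 d2 unfolding h_def by auto
  have e: "y + h *\<^sub>R b + h *\<^sub>R a = y + h *\<^sub>R a + h *\<^sub>R b" by (simp add: algebra_simps)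
  have "h^2 * \<bar>D a b - D b a\<bar> \<le> (\<alpha>/4) * h^2 + (\<alpha>/4) * h^2"
  proof -
    have "h^2 * \<bar>D a b - D b a\<bar> = \<bar>h^2 * D a b - h^2 * D b a\<bar>"
      by (simp add: abs_mult right_diff_distrib[symmetric])
    then show ?thesis using H1[OF h(1,2)] H2[OF h(1,3)] unfolding e by linarith
  qed
  hence "h^2 * \<alpha> \<le> h^2 * (\<alpha>/2)" unfolding \<alpha>_def by (simp add: algebra_simps)
  moreover have "h^2 > 0" using h by simp
  moreover have "h^2 * (\<alpha>/2) < h^2 * \<alpha>" using a0 `h^2 > 0` by (intro mult_strict_left_mono) auto
  ultimately show False by linarith
qed

definition mlin :: "nat \<Rightarrow> ('a::real_vector list \<Rightarrow> real) \<Rightarrow> bool" where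
  "mlin n M \<longleftrightarrow> (\<forall>xs ys. length xs + 1 + length ys = n \<longrightarrow> linear (\<lambda>v. M (xs @ v # ys)))"

definition symf :: "nat \<Rightarrow> ('a list \<Rightarrow> real) \<Rightarrow> bool" where
  "symf n M \<longleftrightarrow> (\<forall>xs ys a b. length xs + 2 + length ys = n \<longrightarrow> M (xs @ a # b # ys) = M (xs @ b # a # ys))"

lemma mlin_Cons: "mlin (Suc n) M \<Longrightarrow> mlin n (\<lambda>vs. M (v # vs))"
  unfolding mlin_def
proof (intro allI impI)
  fix xs ys :: "'a list"
  assume "\<forall>xs ys. length xs + 1 + length ys = Suc n \<longrightarrow> linear (\<lambda>v. M (xs @ v # ys))"
    and "length xs + 1 + length ys = n"
  then have "length (v#xs) + 1 + length ys = Suc n \<longrightarrow> linear (\<lambda>va. M ((v#xs) @ va # ys))" by blast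
  then show "linear (\<lambda>va. M (v # xs @ va # ys))" using `length xs + 1 + length ys = n` by simp
qed

lemma mlin_hd: "mlin (Suc n) M \<Longrightarrow> length ys = n \<Longrightarrow> linear (\<lambda>v. M (v # ys))"
proof -
  assume a: "mlin (Suc n) M" "length ys = n"
  then have "length ([]::'a list) + 1 + length ys = Suc n \<longrightarrow> linear (\<lambda>v. M ([] @ v # ys))" unfolding mlin_def by blast
  then show ?thesis using a by simp
qed

lemma symf_Cons: "symf (Suc n) M \<Longrightarrow> symf n (\<lambda>vs. M (v # vs))"
  unfolding symf_def
proof (intro allI impI)
  fix xs ys :: "'a list" and a b
  assume "\<forall>xs ys a b. length xs + 2 + length ys = Suc n \<longrightarrow> M (xs @ a # b # ys) = M (xs @ b # a # ys)"
    and "length xs + 2 + length ys = n"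
  then have "length (v#xs) + 2 + length ys = Suc n \<longrightarrow> M ((v#xs) @ a # b # ys) = M ((v#xs) @ b # a # ys)" by blast
  then show "M (v # xs @ a # b # ys) = M (v # xs @ b # a # ys)" using `length xs + 2 + length ys = n` by simp
qed

lemma symf_hd: "symf (Suc (Suc n)) M \<Longrightarrow> length ys = n \<Longrightarrow> M (a # b # ys) = M (b # a # ys)"
proof -
  assume a: "symf (Suc (Suc n)) M" "length ys = n"
  then have "length ([]::'a list) + 2 + length ys = Suc (Suc n) \<longrightarrow> M ([] @ a # b # ys) = M ([] @ b # a # ys)" unfolding symf_def by blast
  then show ?thesis using a by simp
qed

lemma mlin_diff: "mlin n A \<Longrightarrow> mlin n B \<Longrightarrow> mlin n (\<lambda>vs. A vs - B vs)"
  unfolding mlin_def by (auto intro: linear_compose_sub)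

lemma lin_basis:
  fixes L :: "real^'n \<Rightarrow> real"
  assumes "linear L"
  shows "L v = (\<Sum>i\<in>UNIV. v$i * L (axis i 1))"
proof -
  have "L v = L (\<Sum>i\<in>UNIV. v$i *\<^sub>R axis i 1)"
    using basis_expansion[of v] by (simp add: scalar_mult_eq_scaleR)
  also have "\<dots> = (\<Sum>i\<in>UNIV. v$i * L (axis i 1))"
    by (simp add: linear_sum[OF assms] linear_scale[OF assms])
  finally show ?thesis .
qed

lemma symf_move:
  assumes "symf n M"
  shows "k + 1 + m = n \<Longrightarrow> M (replicate k e @ d # replicate m e) = M (d # replicate (k + m) e)"
proof (induction k arbitrary: m)
  case 0 then show ?case by simp
next
  case (Suc k)
  have "replicate (Suc k) e @ d # replicate m e = replicate k e @ e # d # replicate m e"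
    by (simp add: replicate_append_same[symmetric])
  also have "M \<dots> = M (replicate k e @ d # e # replicate m e)"
    using assms Suc.prems unfolding symf_def by simp
  also have "replicate k e @ d # e # replicate m e = replicate k e @ d # replicate (Suc m) e" by simp
  also have "M \<dots> = M (d # replicate (k + Suc m) e)" using Suc.IH[of "Suc m"] Suc.prems by simp
  finally show ?case by simp
qed

lemma prod_norm_nonneg: "prod_list (map norm vs) \<ge> (0::real)"
  by (induction vs) auto


lemma hd_deriv:
  assumes "hdiff p f" "k < p"
  shows "((\<lambda>y. hderiv k f y vs) has_derivative (\<lambda>v. hderiv (Suc k) f y (v # vs))) (at y)"
proof -
  have "(\<lambda>y. hderiv k f y vs) differentiable (at y)" using assms unfolding hdiff_def by blast
  then show ?thesis by (simp add: frechet_derivative_works)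
qed

lemma hd_sym:
  assumes "hdiff p f"
  shows "length xs + 2 + length ys = k \<Longrightarrow> k \<le> p \<Longrightarrow>
     hderiv k f y (xs @ a # b # ys) = hderiv k f y (xs @ b # a # ys)"
proof (induction xs arbitrary: k y)
  case Nil
  then obtain m where k: "k = Suc (Suc m)" and m: "m = length ys" by auto
  have "hderiv (Suc (Suc m)) f y (a # b # ys) = hderiv (Suc (Suc m)) f y (b # a # ys)"
    by (rule schwarz[where g="\<lambda>z. hderiv m f z ys" and g'="\<lambda>z v. hderiv (Suc m) f z (v # ys)"
          and D="\<lambda>u v. hderiv (Suc (Suc m)) f y (u # v # ys)"])
       (rule hd_deriv[OF assms], use Nil.prems k in simp)+
  then show ?case using k by simp
next
  case (Cons x xs)
  then obtain k' where k: "k = Suc k'" by (cases k) auto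
  have "(\<lambda>z. hderiv k' f z (xs @ a # b # ys)) = (\<lambda>z. hderiv k' f z (xs @ b # a # ys))"
    using Cons.IH[of k'] Cons.prems k by auto
  then show ?case using k by simp
qed

lemma hd_symf: "hdiff p f \<Longrightarrow> k \<le> p \<Longrightarrow> symf k (hderiv k f y)"
  unfolding symf_def using hd_sym by blast

lemma hd_lin:
  assumes "hdiff p f"
  shows "length xs + 1 + length ys = k \<Longrightarrow> k \<le> p \<Longrightarrow>
     linear (\<lambda>v. hderiv k f y (xs @ v # ys))"
proof (induction xs arbitrary: k y)
  case Nil
  then obtain m where k: "k = Suc m" and m: "m < p" by auto
  show ?case using has_derivative_linear[OF hd_deriv[OF assms m, of ys y]] k by simp
next
  case (Cons x xs)
  then obtain k' where k: "k = Suc k'" and kp: "k' < p" by (cases k) auto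
  define G where "G v z = hderiv k' f z (xs @ v # ys)" for v z
  have lin: "linear (\<lambda>v. G v z)" for z using Cons.IH[of k' z] Cons.prems k unfolding G_def by auto
  have dG: "(G v has_derivative (\<lambda>u. hderiv (Suc k') f y (u # xs @ v # ys))) (at y)" for v
    unfolding G_def using hd_deriv[OF assms kp] .
  show ?case unfolding k
  proof (rule linearI)
    fix v1 v2
    have "G (v1 + v2) = (\<lambda>z. G v1 z + G v2 z)" by (rule ext) (simp add: linear_add[OF lin])
    then have "(G (v1 + v2) has_derivative (\<lambda>u. hderiv (Suc k') f y (u # xs @ v1 # ys) + hderiv (Suc k') f y (u # xs @ v2 # ys))) (at y)"
      using has_derivative_add[OF dG dG] by simp
    from has_derivative_unique[OF dG this]
    show "hderiv (Suc k') f y ((x # xs) @ (v1 + v2) # ys) = hderiv (Suc k') f y ((x # xs) @ v1 # ys) + hderiv (Suc k') f y ((x # xs) @ v2 # ys)"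
      by (drule_tac fun_cong[of _ _ x]) simp
  next
    fix r v
    have "G (r *\<^sub>R v) = (\<lambda>z. r * G v z)" by (rule ext) (simp add: linear_scale[OF lin])
    then have "(G (r *\<^sub>R v) has_derivative (\<lambda>u. r * hderiv (Suc k') f y (u # xs @ v # ys))) (at y)"
      using has_derivative_mult_right[OF dG, of r] by simp
    from has_derivative_unique[OF dG this]
    show "hderiv (Suc k') f y ((x # xs) @ (r *\<^sub>R v) # ys) = r *\<^sub>R hderiv (Suc k') f y ((x # xs) @ v # ys)"
      by (drule_tac fun_cong[of _ _ x]) simp
  qed
qed

lemma hd_mlin: "hdiff p f \<Longrightarrow> k \<le> p \<Longrightarrow> mlin k (hderiv k f y)"
  unfolding mlin_def using hd_lin by blast

lemma opnorm_props:
  fixes T :: "(real^'n) list \<Rightarrow> real"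
  shows "mlin k T \<Longrightarrow> tensor_opnorm k T \<ge> 0 \<and>
     (\<forall>vs. length vs = k \<longrightarrow> \<bar>T vs\<bar> \<le> tensor_opnorm k T * prod_list (map norm vs)) \<and>
     (\<forall>C. (\<forall>vs. length vs = k \<longrightarrow> \<bar>T vs\<bar> \<le> C * prod_list (map norm vs)) \<longrightarrow> tensor_opnorm k T \<le> C)"
proof (induction k arbitrary: T)
  case 0
  then show ?case by auto
next
  case (Suc k)
  define n where "n v = tensor_opnorm k (\<lambda>vs. T (v # vs))" for v
  have IH: "n v \<ge> 0 \<and>
     (\<forall>vs. length vs = k \<longrightarrow> \<bar>T (v # vs)\<bar> \<le> n v * prod_list (map norm vs)) \<and>
     (\<forall>C. (\<forall>vs. length vs = k \<longrightarrow> \<bar>T (v # vs)\<bar> \<le> C * prod_list (map norm vs)) \<longrightarrow> n v \<le> C)" for v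
    unfolding n_def using Suc.IH[OF mlin_Cons[OF Suc.prems]] .
  define C0 where "C0 = (\<Sum>i\<in>UNIV. n (axis i 1))"
  have bnd: "\<bar>T (v # vs)\<bar> \<le> (C0 * norm v) * prod_list (map norm vs)" if "length vs = k" for v vs
  proof -
    have "T (v # vs) = (\<Sum>i\<in>UNIV. v$i * T (axis i 1 # vs))"
      using lin_basis[OF mlin_hd[OF Suc.prems that]] .
    hence "\<bar>T (v # vs)\<bar> \<le> (\<Sum>i\<in>UNIV. \<bar>v$i\<bar> * \<bar>T (axis i 1 # vs)\<bar>)"
      by (simp add: abs_mult[symmetric] sum_abs)
    also have "\<dots> \<le> (\<Sum>i\<in>UNIV. norm v * (n (axis i 1) * prod_list (map norm vs)))"
      using IH that by (intro sum_mono mult_mono) (auto simp: component_le_norm_cart)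
    also have "\<dots> = (C0 * norm v) * prod_list (map norm vs)"
      unfolding C0_def by (simp add: sum_distrib_left sum_distrib_right algebra_simps)
    finally show ?thesis .
  qed
  define S where "S = (\<lambda>v. n v / norm v) ` (-{0})"
  have top: "tensor_opnorm (Suc k) T = Sup S" unfolding S_def n_def by simp
  have Sb: "s \<le> C0" if "s \<in> S" for s
  proof -
    from that obtain v where v: "v \<noteq> 0" "s = n v / norm v" unfolding S_def by auto
    have "n v \<le> C0 * norm v" using IH[of v] bnd by blast
    then show ?thesis using v by (simp add: divide_le_eq)
  qed
  have bdd: "bdd_above S" using Sb by (auto simp: bdd_above_def)
  obtain i :: 'n where True by simp
  have ax: "axis i (1::real) \<noteq> 0" by (simp add: axis_eq_0_iff)
  have Sne: "S \<noteq> {}" unfolding S_def using ax by auto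
  have Snn: "s \<ge> 0" if "s \<in> S" for s using that IH unfolding S_def by auto
  have P1: "Sup S \<ge> 0" using cSup_upper[OF _ bdd] Snn Sne by (meson all_not_in_conv order_trans)
  have P2: "\<bar>T vs\<bar> \<le> Sup S * prod_list (map norm vs)" if "length vs = Suc k" for vs
  proof -
    from that obtain v vs' where vs: "vs = v # vs'" and l: "length vs' = k" by (cases vs) auto
    show ?thesis
    proof (cases "v = 0")
      case True
      have "T (v # vs') = 0" using linear_0[OF mlin_hd[OF Suc.prems l]] True by simp
      then show ?thesis using vs True by simp
    next
      case False
      have inS: "n v / norm v \<in> S" unfolding S_def using False by auto
      have "\<bar>T vs\<bar> \<le> n v * prod_list (map norm vs')" using IH[of v] l vs by auto
      also have "\<dots> = (n v / norm v) * (norm v * prod_list (map norm vs'))" using False by simp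
      also have "\<dots> \<le> Sup S * (norm v * prod_list (map norm vs'))"
        by (rule mult_right_mono[OF cSup_upper[OF inS bdd]]) (simp add: prod_norm_nonneg)
      finally show ?thesis using vs by simp
    qed
  qed
  have P3: "Sup S \<le> C" if C: "\<forall>vs. length vs = Suc k \<longrightarrow> \<bar>T vs\<bar> \<le> C * prod_list (map norm vs)" for C
  proof (rule cSup_least[OF Sne])
    fix s assume "s \<in> S"
    then obtain v where v: "v \<noteq> 0" "s = n v / norm v" unfolding S_def by auto
    have "\<forall>vs. length vs = k \<longrightarrow> \<bar>T (v # vs)\<bar> \<le> (C * norm v) * prod_list (map norm vs)"
    proof (intro allI impI)
      fix vs :: "(real^'n) list" assume "length vs = k"
      then have "\<bar>T (v # vs)\<bar> \<le> C * prod_list (map norm (v # vs))" using C by (metis length_Cons)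
      then show "\<bar>T (v # vs)\<bar> \<le> (C * norm v) * prod_list (map norm vs)" by (simp add: mult.assoc)
    qed
    then have "n v \<le> C * norm v" using IH[of v] by blast
    then show "s \<le> C" using v by (simp add: divide_le_eq)
  qed
  show ?case unfolding top using P1 P2 P3 by blast
qed


lemma mlin_rep_deriv:
  fixes M :: "(real^'n) list \<Rightarrow> real"
  shows "mlin (Suc n) M \<Longrightarrow> symf (Suc n) M \<Longrightarrow>
    ((\<lambda>e. M (replicate (Suc n) e)) has_derivative (\<lambda>d. real (Suc n) * M (d # replicate n e))) (at e)"
proof (induction n arbitrary: M e)
  case 0
  have "linear (\<lambda>v. M (v # []))" using mlin_hd[OF 0(1)] by simp
  then have "bounded_linear (\<lambda>v. M (v # []))" by (simp add: linear_conv_bounded_linear)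
  then show ?case using bounded_linear.has_derivative[of "\<lambda>v. M (v # [])" "\<lambda>x. x" "\<lambda>x. x"] by simp
next
  case (Suc n)
  define Mi where "Mi i vs = M (axis i 1 # vs)" for i vs
  have mi: "mlin (Suc n) (Mi i)" "symf (Suc n) (Mi i)" for i
    unfolding Mi_def using mlin_Cons[OF Suc.prems(1)] symf_Cons[OF Suc.prems(2)] by auto
  have lin1: "linear (\<lambda>v. M (v # vs))" if "length vs = Suc n" for vs
    using mlin_hd[OF Suc.prems(1) that] .
  have eq: "(\<lambda>e. M (replicate (Suc (Suc n)) e)) = (\<lambda>e. \<Sum>i\<in>UNIV. e$i * Mi i (replicate (Suc n) e))"
    unfolding Mi_def
  proof (rule ext)
    fix e :: "real^'n"
    show "M (replicate (Suc (Suc n)) e) = (\<Sum>i\<in>UNIV. e$i * M (axis i 1 # replicate (Suc n) e))"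
      using lin_basis[OF lin1[of "replicate (Suc n) e"], of e] by simp
  qed
  have d: "((\<lambda>e. \<Sum>i\<in>UNIV. e$i * Mi i (replicate (Suc n) e)) has_derivative
     (\<lambda>d. \<Sum>i\<in>UNIV. e$i * (real (Suc n) * Mi i (d # replicate n e)) + d$i * Mi i (replicate (Suc n) e))) (at e)"
  proof (rule has_derivative_sum)
    fix i :: 'n
    have dv: "((\<lambda>e. e$i) has_derivative (\<lambda>d. d$i)) (at e)"
      by (rule bounded_linear_imp_has_derivative[OF bounded_linear_vec_nth])
    show "((\<lambda>e. e$i * Mi i (replicate (Suc n) e)) has_derivative
     (\<lambda>d. e$i * (real (Suc n) * Mi i (d # replicate n e)) + d$i * Mi i (replicate (Suc n) e))) (at e)"
      by (rule has_derivative_mult[OF dv Suc.IH[OF mi]])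
  qed
  have "(\<lambda>d. \<Sum>i\<in>UNIV. e$i * (real (Suc n) * Mi i (d # replicate n e)) + d$i * Mi i (replicate (Suc n) e))
      = (\<lambda>d. real (Suc (Suc n)) * M (d # replicate (Suc n) e))"
  proof (rule ext)
    fix d :: "real^'n"
    have A: "(\<Sum>i\<in>UNIV. d$i * Mi i (replicate (Suc n) e)) = M (d # replicate (Suc n) e)"
      unfolding Mi_def using lin_basis[OF lin1[of "replicate (Suc n) e"], of d] by simp
    have B: "(\<Sum>i\<in>UNIV. e$i * Mi i (d # replicate n e)) = M (e # d # replicate n e)"
      unfolding Mi_def using lin_basis[OF lin1[of "d # replicate n e"], of e] by simp
    have C: "M (e # d # replicate n e) = M (d # replicate (Suc n) e)"
      using symf_hd[OF Suc.prems(2), of "replicate n e" e d] by simp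
    have "(\<Sum>i\<in>UNIV. e$i * (real (Suc n) * Mi i (d # replicate n e)) + d$i * Mi i (replicate (Suc n) e))
        = real (Suc n) * (\<Sum>i\<in>UNIV. e$i * Mi i (d # replicate n e)) + (\<Sum>i\<in>UNIV. d$i * Mi i (replicate (Suc n) e))"
      by (simp add: sum.distrib sum_distrib_left algebra_simps)
    also have "\<dots> = real (Suc (Suc n)) * M (d # replicate (Suc n) e)"
      using A B C by (simp add: algebra_simps)
    finally show "(\<Sum>i\<in>UNIV. e$i * (real (Suc n) * Mi i (d # replicate n e)) + d$i * Mi i (replicate (Suc n) e))
        = real (Suc (Suc n)) * M (d # replicate (Suc n) e)" .
  qed
  then show ?case using d unfolding eq by simp
qed

lemma taylor1d:
  fixes F :: "nat \<Rightarrow> real \<Rightarrow> real"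
  shows "(\<And>m s. m < n \<Longrightarrow> DERIV (F m) s :> F (Suc m) s) \<Longrightarrow>
    (\<And>s. 0 \<le> s \<Longrightarrow> s \<le> 1 \<Longrightarrow> \<bar>F n s - F n 0\<bar> \<le> M * s) \<Longrightarrow>
    0 \<le> s \<Longrightarrow> s \<le> 1 \<Longrightarrow>
    \<bar>F 0 s - (\<Sum>j\<le>n. F j 0 * s^j / fact j)\<bar> \<le> M * s^(Suc n) / fact (Suc n)"
proof (induction n arbitrary: F s)
  case 0
  then show ?case by simp
next
  case (Suc n)
  define r where "r s = F 0 s - (\<Sum>j\<le>Suc n. F j 0 * s^j / fact j)" for s
  define r1 where "r1 s = F 1 s - (\<Sum>j\<le>n. F (Suc j) 0 * s^j / fact j)" for s
  have IH: "\<bar>r1 t\<bar> \<le> M * t^(Suc n) / fact (Suc n)" if "0 \<le> t" "t \<le> 1" for t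
    unfolding r1_def using Suc.IH[of "\<lambda>j. F (Suc j)" t] Suc.prems that by auto
  have dr: "DERIV r t :> r1 t" for t
  proof -
    have "DERIV (\<lambda>t. \<Sum>j\<le>Suc n. F j 0 * t^j / fact j) t :> (\<Sum>j\<le>Suc n. F j 0 * (real j * t^(j - 1)) / fact j)"
      by (intro DERIV_sum) (auto intro!: derivative_eq_intros)
    then have "DERIV r t :> F 1 t - (\<Sum>j\<le>Suc n. F j 0 * (real j * t^(j - 1)) / fact j)"
      unfolding r_def using Suc.prems(1)[of 0 t] by (intro DERIV_diff) auto
    moreover have "(\<Sum>j\<le>Suc n. F j 0 * (real j * t^(j - 1)) / fact j) = (\<Sum>j\<le>n. F (Suc j) 0 * t^j / fact j)"
      by (subst sum.atMost_Suc_shift) (auto simp del: sum.atMost_Suc simp add: fact_Suc intro!: sum.cong)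
    ultimately show ?thesis unfolding r1_def by simp
  qed
  have r0: "r 0 = 0" unfolding r_def by (simp add: sum.atMost_Suc_shift del: sum.atMost_Suc)
  define B where "B t = M * t^(Suc (Suc n)) / fact (Suc (Suc n))" for t
  have dB: "DERIV B t :> M * t^(Suc n) / fact (Suc n)" for t
  proof -
    have "DERIV (\<lambda>t. t^(Suc (Suc n))) t :> real (Suc (Suc n)) * t^(Suc n)"
      using DERIV_pow[of "Suc (Suc n)" t] by simp
    then have "DERIV B t :> M * (real (Suc (Suc n)) * t^(Suc n)) / fact (Suc (Suc n))"
      unfolding B_def by (intro DERIV_cdivide DERIV_cmult)
    moreover have "M * (real (Suc (Suc n)) * t^(Suc n)) / fact (Suc (Suc n)) = M * t^(Suc n) / fact (Suc n)"
    proof -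
      have c: "\<And>a x f. (a::real) \<noteq> 0 \<Longrightarrow> M * (a * x) / (a * f) = M * x / f" by simp
      have "fact (Suc (Suc n)) = real (Suc (Suc n)) * (fact (Suc n) :: real)" by (rule fact_Suc)
      then show ?thesis using c[of "real (Suc (Suc n))" "t^(Suc n)" "fact (Suc n)"] by (simp only:)
    qed
    ultimately show ?thesis by simp
  qed
  have up: "(\<lambda>t. B t - r t) 0 \<le> (\<lambda>t. B t - r t) s"
  proof (rule DERIV_nonneg_imp_nondecreasing[OF Suc.prems(3)])
    fix x assume x: "0 \<le> x" "x \<le> s"
    have "DERIV (\<lambda>t. B t - r t) x :> M * x^(Suc n)/fact(Suc n) - r1 x" by (rule DERIV_diff[OF dB dr])
    moreover have "0 \<le> M * x^(Suc n)/fact(Suc n) - r1 x" using IH[of x] x Suc.prems(4) by auto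
    ultimately show "\<exists>y. DERIV (\<lambda>t. B t - r t) x :> y \<and> y \<ge> 0" by blast
  qed
  have lo: "(\<lambda>t. B t + r t) 0 \<le> (\<lambda>t. B t + r t) s"
  proof (rule DERIV_nonneg_imp_nondecreasing[OF Suc.prems(3)])
    fix x assume x: "0 \<le> x" "x \<le> s"
    have "DERIV (\<lambda>t. B t + r t) x :> M * x^(Suc n)/fact(Suc n) + r1 x" by (rule DERIV_add[OF dB dr])
    moreover have "0 \<le> M * x^(Suc n)/fact(Suc n) + r1 x" using IH[of x] x Suc.prems(4) by auto
    ultimately show "\<exists>y. DERIV (\<lambda>t. B t + r t) x :> y \<and> y \<ge> 0" by blast
  qed
  have "B 0 = 0" unfolding B_def by simp
  then show ?case using up lo r0 unfolding r_def[symmetric] B_def by auto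
qed

lemma subgrad_lemma:
  fixes \<psi> h :: "'a::real_inner \<Rightarrow> real"
  assumes ne: "\<And>x. subdiff \<psi> x \<noteq> {}"
    and le: "\<And>z. h z - h x0 \<le> \<psi> z - \<psi> x0"
    and dh: "(h has_derivative h') (at x0)"
    and hu: "\<And>v. h' v = inner u v"
  shows "u \<in> subdiff \<psi> x0"
  unfolding subdiff_def
proof (intro CollectI allI)
  fix y
  define v where "v = y - x0"
  have conv: "\<psi> (x0 + t *\<^sub>R v) \<le> (1 - t) * \<psi> x0 + t * \<psi> y" if "0 \<le> t" "t \<le> 1" for t
  proof -
    define z where "z = x0 + t *\<^sub>R v"
    obtain g where g: "g \<in> subdiff \<psi> z" using ne by blast
    have 1: "\<psi> z + inner g (x0 - z) \<le> \<psi> x0" and 2: "\<psi> z + inner g (y - z) \<le> \<psi> y"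
      using g unfolding subdiff_def by auto
    have a: "x0 - z = (-t) *\<^sub>R v" and b: "y - z = (1 - t) *\<^sub>R v" unfolding z_def v_def by (auto simp: algebra_simps)
    have "(1 - t) * (\<psi> z - t * inner g v) + t * (\<psi> z + (1 - t) * inner g v) \<le> (1 - t) * \<psi> x0 + t * \<psi> y"
      using 1 2 that unfolding a b by (intro add_mono mult_left_mono) auto
    then show ?thesis unfolding z_def by (simp add: algebra_simps)
  qed
  show "\<psi> x0 + inner u (y - x0) \<le> \<psi> y"
  proof (rule ccontr)
    assume "\<not> ?thesis"
    then have gap: "inner u v - (\<psi> y - \<psi> x0) > 0" unfolding v_def by simp
    define gp where "gp = inner u v - (\<psi> y - \<psi> x0)"
    have v0: "v \<noteq> 0"
    proof
      assume "v = 0" then have "y = x0" by (simp add: v_def)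
      then show False using gap `v = 0` by simp
    qed
    have nv: "norm v > 0" using v0 by simp
    have "gp / (2 * norm v) > 0" using gap nv unfolding gp_def by simp
    then obtain \<delta> where \<delta>: "\<delta> > 0" and H: "\<And>z. norm (z - x0) < \<delta> \<Longrightarrow> norm (h z - h x0 - h' (z - x0)) \<le> gp / (2 * norm v) * norm (z - x0)"
      using dh[unfolded has_derivative_at_alt] by blast
    define t where "t = min 1 (\<delta> / (2 * norm v))"
    have t: "0 < t" "t \<le> 1" "t * norm v < \<delta>" using \<delta> nv unfolding t_def
      by (auto simp: min_def field_simps)
    have "norm ((x0 + t *\<^sub>R v) - x0) < \<delta>" using t by simp
    from H[OF this] have "\<bar>h (x0 + t *\<^sub>R v) - h x0 - t * inner u v\<bar> \<le> gp / (2 * norm v) * (t * norm v)"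
      using t by (simp add: hu inner_scaleR_right)
    also have "\<dots> = t * (gp / 2)" using nv by simp
    finally have "h (x0 + t *\<^sub>R v) - h x0 \<ge> t * inner u v - t * (gp / 2)" by linarith
    moreover have "h (x0 + t *\<^sub>R v) - h x0 \<le> t * (\<psi> y - \<psi> x0)"
      using le[of "x0 + t *\<^sub>R v"] conv[of t] t by (simp add: algebra_simps)
    ultimately have "t * (inner u v - gp / 2 - (\<psi> y - \<psi> x0)) \<le> 0" by (simp add: algebra_simps)
    moreover have "inner u v - gp / 2 - (\<psi> y - \<psi> x0) > 0" using gap unfolding gp_def by (simp add: field_simps)
    ultimately show False using t(1) mult_pos_pos[of t] by fastforce
  qed
qed


declare hderiv.simps(2)[simp del]

theorem lemma5:
  fixes \<phi> \<phi>0 :: "real^'d \<Rightarrow> real" and p :: nat and w x\<phi> xh :: "real^'d"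
    and \<mu> q :: real
  assumes "p \<ge> 1"
    and "hdiff p \<phi>"
    and "bdd_above (lip_quotients p \<phi>)"
    and "\<forall>x. \<phi> x\<phi> + \<phi>0 x\<phi> \<le> \<phi> x + \<phi>0 x"
    and "\<forall>x. taylor p \<phi> w xh + Lip_hderiv p \<phi> / fact (p + 1) * norm (xh - w) ^ (p + 1) + \<phi>0 xh
            \<le> taylor p \<phi> w x + Lip_hderiv p \<phi> / fact (p + 1) * norm (x - w) ^ (p + 1) + \<phi>0 x"
    and "\<mu> > 0" and "q > 0"
    and "gradient_growth (\<lambda>r. \<mu> * r powr q)
           (\<lambda>x. taylor p \<phi> w x + Lip_hderiv p \<phi> / fact (p + 1) * norm (x - w) ^ (p + 1) + \<phi>0 x)"
  shows "norm (x\<phi> - xh) powr (q - 1)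
           \<le> 2 * Lip_hderiv p \<phi> / \<mu> * (1 / fact p) * norm (x\<phi> - w) ^ p"
proof -
  let ?L = "Lip_hderiv p \<phi>"
  obtain p' where p: "p = Suc p'" using assms(1) by (cases p) auto
  define e where "e = x\<phi> - w"
  define d where "d = x\<phi> - xh"
  have mdiff: "mlin p (\<lambda>vs. hderiv p \<phi> x vs - hderiv p \<phi> y vs)" for x y
    by (rule mlin_diff[OF hd_mlin[OF assms(2)] hd_mlin[OF assms(2)]]) auto
  have Lb: "\<bar>hderiv p \<phi> x vs - hderiv p \<phi> y vs\<bar> \<le> ?L * dist x y * prod_list (map norm vs)"
    if vs: "length vs = p" for x y vs
  proof (cases "x = y")
    case True then show ?thesis by simp
  next
    case False
    define opn where "opn = tensor_opnorm p (\<lambda>vs. hderiv p \<phi> x vs - hderiv p \<phi> y vs)"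
    have P: "opn \<ge> 0" "\<bar>hderiv p \<phi> x vs - hderiv p \<phi> y vs\<bar> \<le> opn * prod_list (map norm vs)"
      using opnorm_props[OF mdiff[of x y]] vs unfolding opn_def by auto
    have "opn / dist x y \<in> lip_quotients p \<phi>" unfolding lip_quotients_def opn_def using False by blast
    then have "opn / dist x y \<le> ?L" unfolding Lip_hderiv_def using cSup_upper assms(3) by blast
    then have "opn \<le> ?L * dist x y" using False by (simp add: divide_le_eq)
    then show ?thesis using P prod_norm_nonneg[of vs]
      by (meson mult_right_mono order_trans)
  qed
  have L0: "?L \<ge> 0"
  proof -
    obtain i :: 'd where True by simp
    define y :: "real^'d" where "y = axis i 1"
    have y0: "(0::real^'d) \<noteq> y" unfolding y_def by (simp add: axis_eq_0_iff)
    define opn where "opn = tensor_opnorm p (\<lambda>vs. hderiv p \<phi> 0 vs - hderiv p \<phi> y vs)"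
    have "opn \<ge> 0" using opnorm_props[OF mdiff[of 0 y]] unfolding opn_def by auto
    moreover have "opn / dist 0 y \<in> lip_quotients p \<phi>" unfolding lip_quotients_def opn_def using y0 by blast
    then have "opn / dist 0 y \<le> ?L" unfolding Lip_hderiv_def using cSup_upper assms(3) by blast
    ultimately show ?thesis by (meson order_trans zero_le_dist divide_nonneg_nonneg)
  qed
  define F where "F j s = hderiv (Suc j) \<phi> (w + s *\<^sub>R e) (replicate j e @ [d])" for j s
  have dF: "DERIV (F m) s :> F (Suc m) s" if m: "m < p'" for m s
  proof -
    define vs where "vs = replicate m e @ [d]"
    have D1: "((\<lambda>z. hderiv (Suc m) \<phi> z vs) has_derivative (\<lambda>v. hderiv (Suc (Suc m)) \<phi> (w + s *\<^sub>R e) (v # vs))) (at (w + s *\<^sub>R e))"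
      by (rule hd_deriv[OF assms(2)]) (use m p in simp)
    have lin: "linear (\<lambda>v. hderiv (Suc (Suc m)) \<phi> (w + s *\<^sub>R e) (v # vs))"
      using has_derivative_linear[OF D1] .
    have "((\<lambda>s. hderiv (Suc m) \<phi> (w + s *\<^sub>R e) vs) has_derivative (\<lambda>t. hderiv (Suc (Suc m)) \<phi> (w + s *\<^sub>R e) ((t *\<^sub>R e) # vs))) (at s)"
    proof -
      have Dl: "((\<lambda>s. w + s *\<^sub>R e) has_derivative (\<lambda>t. t *\<^sub>R e)) (at s)" by (auto intro!: derivative_eq_intros)
      show ?thesis using has_derivative_compose[OF Dl D1] .
    qed
    moreover have "(\<lambda>t. hderiv (Suc (Suc m)) \<phi> (w + s *\<^sub>R e) ((t *\<^sub>R e) # vs)) = (*) (F (Suc m) s)"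
    proof (rule ext)
      fix t :: real
      have "hderiv (Suc (Suc m)) \<phi> (w + s *\<^sub>R e) ((t *\<^sub>R e) # vs) = t * hderiv (Suc (Suc m)) \<phi> (w + s *\<^sub>R e) (e # vs)"
        using linear_scale[OF lin, of t e] by simp
      then show "hderiv (Suc (Suc m)) \<phi> (w + s *\<^sub>R e) ((t *\<^sub>R e) # vs) = F (Suc m) s * t"
        unfolding F_def vs_def by simp
    qed
    ultimately show ?thesis unfolding has_field_derivative_def F_def vs_def by simp
  qed
  define Mc where "Mc = ?L * norm e ^ p * norm d"
  have lipF: "\<bar>F p' s - F p' 0\<bar> \<le> Mc * s" if s: "0 \<le> s" "s \<le> 1" for s
  proof -
    have "\<bar>F p' s - F p' 0\<bar> \<le> ?L * dist (w + s *\<^sub>R e) w * prod_list (map norm (replicate p' e @ [d]))"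
      using Lb[of "replicate p' e @ [d]" "w + s *\<^sub>R e" w] p unfolding F_def by simp
    also have "\<dots> = Mc * s" unfolding Mc_def p using s
      by (simp add: dist_norm prod_list_replicate algebra_simps)
    finally show ?thesis .
  qed
  have tay: "\<bar>F 0 1 - (\<Sum>j\<le>p'. F j 0 * 1^j / fact j)\<bar> \<le> Mc * 1^(Suc p') / fact (Suc p')"
    by (rule taylor1d[of p' F Mc 1]) (use dF lipF in auto)
  have F0: "F j 0 = hderiv (Suc j) \<phi> w (d # replicate j e)" if "j \<le> p'" for j
    using symf_move[OF hd_symf[OF assms(2), of "Suc j" w], of j 0 e d] that p unfolding F_def by simp
  have F01: "F 0 1 = hderiv (Suc 0) \<phi> x\<phi> [d]" unfolding F_def e_def by simp
  have dTi: "((\<lambda>y. hderiv i \<phi> w (replicate i (y - w))) has_derivative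
      (\<lambda>v. real i * hderiv i \<phi> w (v # replicate (i - 1) (y - w)))) (at y)" if "i \<le> p" for i y
  proof (cases i)
    case 0 then show ?thesis by simp
  next
    case (Suc n)
    have M: "((\<lambda>e. hderiv (Suc n) \<phi> w (replicate (Suc n) e)) has_derivative
        (\<lambda>d. real (Suc n) * hderiv (Suc n) \<phi> w (d # replicate n (y - w)))) (at (y - w))"
      by (rule mlin_rep_deriv[OF hd_mlin[OF assms(2)] hd_symf[OF assms(2)]]) (use that Suc in auto)
    have "((\<lambda>y. hderiv (Suc n) \<phi> w (replicate (Suc n) (y - w))) has_derivative
        (\<lambda>v. real (Suc n) * hderiv (Suc n) \<phi> w (v # replicate n (y - w)))) (at y)"
    proof -
      have Dl: "((\<lambda>y. y - w) has_derivative (\<lambda>v. v)) (at y)" by (auto intro!: derivative_eq_intros)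
      show ?thesis using has_derivative_compose[OF Dl M] .
    qed
    then show ?thesis using Suc by simp
  qed
  define T' where "T' v = (\<Sum>i=0..p. 1 / fact i * (real i * hderiv i \<phi> w (v # replicate (i - 1) (x\<phi> - w))))" for v
  have dT: "(taylor p \<phi> w has_derivative T') (at x\<phi>)"
  proof -
    have "((\<lambda>y. \<Sum>i=0..p. 1 / fact i * hderiv i \<phi> w (replicate i (y - w))) has_derivative T') (at x\<phi>)"
      unfolding T'_def
      by (intro has_derivative_sum bounded_linear.has_derivative[OF bounded_linear_mult_right] dTi) auto
    then show ?thesis unfolding taylor_def[abs_def] by simp
  qed
  have T'd: "T' d = (\<Sum>j\<le>p'. F j 0 * 1^j / fact j)"
  proof -
    have "T' d = (\<Sum>j=0..p'. 1 / fact (Suc j) * (real (Suc j) * hderiv (Suc j) \<phi> w (d # replicate j e)))"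
      unfolding T'_def p e_def by (subst sum.atLeast0_atMost_Suc_shift) simp
    also have "\<dots> = (\<Sum>j\<le>p'. F j 0 * 1^j / fact j)"
      unfolding atLeast0AtMost
    proof (rule sum.cong[OF refl])
      fix j assume "j \<in> {..p'}"
      then have "j \<le> p'" by simp
      then show "1 / fact (Suc j) * (real (Suc j) * hderiv (Suc j) \<phi> w (d # replicate j e)) = F j 0 * 1^j / fact j"
        using F0 by (simp add: fact_Suc[of j] divide_simps del: fact_Suc)
    qed
    finally show ?thesis .
  qed
  define R where "R y = ?L / fact (p + 1) * norm (y - w) ^ (p + 1)" for y
  obtain R' where dR: "(R has_derivative R') (at x\<phi>)" and bR: "\<And>v. \<bar>R' v\<bar> \<le> ?L / fact p * norm e ^ p * norm v"
  proof (cases "e = 0")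
    case False
    have dn: "((\<lambda>y. norm (y - w)) has_derivative (\<lambda>h. h \<bullet> sgn e)) (at x\<phi>)"
    proof -
      have Dl: "((\<lambda>y. y - w) has_derivative (\<lambda>v. v)) (at x\<phi>)" by (auto intro!: derivative_eq_intros)
      show ?thesis using has_derivative_compose[OF Dl has_derivative_norm[OF False, unfolded e_def]] unfolding e_def .
    qed
    have "(R has_derivative (\<lambda>h. ?L / fact (p + 1) * (of_nat (p + 1) * (h \<bullet> sgn e) * norm (x\<phi> - w) ^ (p + 1 - 1)))) (at x\<phi>)"
      unfolding R_def by (intro bounded_linear.has_derivative[OF bounded_linear_mult_right] has_derivative_power dn)
    moreover have "\<bar>?L / fact (p + 1) * (of_nat (p + 1) * (h \<bullet> sgn e) * norm (x\<phi> - w) ^ (p + 1 - 1))\<bar> \<le> ?L / fact p * norm e ^ p * norm h" for h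
    proof -
      have cs: "\<bar>h \<bullet> sgn e\<bar> \<le> norm h" using Cauchy_Schwarz_ineq2[of h "sgn e"] False by (simp add: norm_sgn)
      have eq: "?L / fact (p + 1) * of_nat (p + 1) = ?L / fact p" by (simp add: fact_Suc[of p] del: fact_Suc)
      have "\<bar>?L / fact (p + 1) * (of_nat (p + 1) * (h \<bullet> sgn e) * norm (x\<phi> - w) ^ (p + 1 - 1))\<bar>
          = ?L / fact p * norm e ^ p * \<bar>h \<bullet> sgn e\<bar>"
        using L0 unfolding e_def[symmetric] eq[symmetric] by (simp add: abs_mult)
      also have "\<dots> \<le> ?L / fact p * norm e ^ p * norm h" using cs L0 by (intro mult_left_mono) auto
      finally show ?thesis .
    qed
    ultimately show ?thesis using that by blast
  next
    case True
    then have xw: "x\<phi> = w" unfolding e_def by simp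
    define c where "c = ?L / fact (p + 1)"
    have c0: "c \<ge> 0" unfolding c_def using L0 by simp
    have "(R has_derivative (\<lambda>_. 0)) (at x\<phi>)"
      unfolding has_derivative_at_alt
    proof (intro conjI allI impI bounded_linear_zero)
      fix \<epsilon> :: real assume \<epsilon>: "\<epsilon> > 0"
      show "\<exists>\<delta>>0. \<forall>y. norm (y - x\<phi>) < \<delta> \<longrightarrow> norm (R y - R x\<phi> - 0) \<le> \<epsilon> * norm (y - x\<phi>)"
      proof (intro exI[of _ "min 1 (\<epsilon> / (c + 1))"] conjI allI impI)
        show "min 1 (\<epsilon> / (c + 1)) > 0" using \<epsilon> c0 by simp
        fix y assume y: "norm (y - x\<phi>) < min 1 (\<epsilon> / (c + 1))"
        define r where "r = norm (y - x\<phi>)"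
        have r: "0 \<le> r" "r \<le> 1" "r \<le> \<epsilon> / (c + 1)" using y unfolding r_def by auto
        have "r ^ p \<le> r" using r p by (simp add: mult_left_le power_le_one)
        have "norm (R y - R x\<phi> - 0) = c * r ^ p * r" unfolding R_def c_def r_def xw p using L0[unfolded p] by (simp add: abs_mult mult_ac)
        also have "\<dots> \<le> c * r * r" using `r ^ p \<le> r` c0 r by (intro mult_right_mono mult_left_mono) auto
        also have "\<dots> \<le> c * (\<epsilon> / (c + 1)) * r" using r c0 by (intro mult_right_mono mult_left_mono) auto
        also have "\<dots> \<le> \<epsilon> * r" using c0 \<epsilon> r by (intro mult_right_mono) (auto simp: field_simps)
        finally show "norm (R y - R x\<phi> - 0) \<le> \<epsilon> * norm (y - x\<phi>)" unfolding r_def .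
      qed
    qed
    moreover have "\<bar>(0::real)\<bar> \<le> ?L / fact p * norm e ^ p * norm v" for v using L0 by simp
    ultimately show ?thesis using that by blast
  qed
  have R'b: "R' d \<le> ?L / fact p * norm e ^ p * norm d" using bR[of d] by simp
  have dphi: "(\<phi> has_derivative (\<lambda>v. hderiv (Suc 0) \<phi> x\<phi> (v # []))) (at x\<phi>)"
    using hd_deriv[OF assms(2), of 0 "[]" x\<phi>] p by simp
  define h where "h y = taylor p \<phi> w y + R y - \<phi> y" for y
  define h' where "h' v = T' v + R' v - hderiv (Suc 0) \<phi> x\<phi> (v # [])" for v
  have dh: "(h has_derivative h') (at x\<phi>)"
    unfolding h_def[abs_def] h'_def[abs_def] by (intro has_derivative_diff has_derivative_add dT dR dphi)
  have linh: "linear h'" using has_derivative_linear[OF dh] .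
  define u where "u = adjoint h' 1"
  have hu: "h' v = inner u v" for v
    using adjoint_works[OF linh, of v 1] unfolding u_def by (simp add: inner_commute)
  define \<psi> where "\<psi> x = taylor p \<phi> w x + ?L / fact (p + 1) * norm (x - w) ^ (p + 1) + \<phi>0 x" for x
  have gg: "\<forall>x. subdiff \<psi> x \<noteq> {}"
     "\<And>x y u v. u \<in> subdiff \<psi> y \<Longrightarrow> v \<in> subdiff \<psi> x \<Longrightarrow> \<mu> * norm (x - y) powr q \<le> inner (y - x) (u - v)"
    using assms(8) unfolding gradient_growth_def \<psi>_def[abs_def] by auto
  have le: "h z - h x\<phi> \<le> \<psi> z - \<psi> x\<phi>" for z
    using assms(4) unfolding h_def \<psi>_def R_def by (auto simp: algebra_simps)
  have usub: "u \<in> subdiff \<psi> x\<phi>"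
    by (rule subgrad_lemma[OF _ le dh hu]) (use gg(1) in auto)
  have zsub: "0 \<in> subdiff \<psi> xh" using assms(5) unfolding subdiff_def \<psi>_def by auto
  have main: "\<mu> * norm (xh - x\<phi>) powr q \<le> inner (x\<phi> - xh) (u - 0)"
    by (rule gg(2)[OF usub zsub])
  have "inner (x\<phi> - xh) (u - 0) = h' d" unfolding hu d_def by (simp add: inner_commute)
  also have "\<dots> = (T' d - F 0 1) + R' d" unfolding h'_def F01 by simp
  also have "\<dots> \<le> Mc / fact p + ?L / fact p * norm e ^ p * norm d"
    using tay T'd R'b p by (simp add: abs_le_iff)
  also have "\<dots> = (2 * ?L / fact p * norm e ^ p) * norm d" unfolding Mc_def by (simp add: field_simps)
  finally have key: "\<mu> * norm d powr q \<le> (2 * ?L / fact p * norm e ^ p) * norm d"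
    using main unfolding d_def by (simp add: norm_minus_commute)
  have K0: "0 \<le> 2 * ?L / \<mu> * (1 / fact p) * norm e ^ p" using L0 assms(6) by simp
  show ?thesis
  proof (cases "d = 0")
    case True
    then show ?thesis using K0 unfolding d_def e_def by simp
  next
    case False
    then have n0: "norm d > 0" by simp
    have "norm d powr q = norm d powr (q - 1) * norm d"
      using n0 powr_add[of "norm d" "q - 1" 1] by simp
    then have "\<mu> * norm d powr (q - 1) * norm d \<le> (2 * ?L / fact p * norm e ^ p) * norm d"
      using key by (simp add: mult.assoc)
    then have "\<mu> * norm d powr (q - 1) \<le> 2 * ?L / fact p * norm e ^ p" using mult_right_le_imp_le[OF _ n0] by blast
    then have "norm d powr (q - 1) \<le> (2 * ?L / fact p * norm e ^ p) / \<mu>"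
      using assms(6) by (simp add: field_simps)
    then show ?thesis unfolding d_def e_def by (simp add: field_simps)
  qed
qed

end
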